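(* Consider the static single-object erasure-coded Byzantine read/write protocol described in the context, run over a fixed set $C$ of $n=|C|$ flexnodes using an $[n,k]$ RLNC code, where at most $b<\frac{|C|-k}{3}$ flexnodes are Byzantine and any $k$ encoded elements suffice to decode. In any execution, if a read operation $\rho$ is concurrent with at most $\delta$ write operations, then $\rho$ (in its get-data primitive) finds a tag appearing in at least $k$ received lists and returns a decoded value $v$.
   Context: Model. $C$ is a fixed finite set of processes ("flexnodes") communicating over asynchronous, reliable point-to-point channels: messages between nonfaulty processes are eventually delivered unaltered, with arbitrary delays. Up to $b$ flexnodes may be Byzantine. Processes invoking reads/writes follow the protocol but may crash. Signatures are unforgeable. An $[n,k]$ RLNC code with $n=|C|$: $\mathrm{Encode}(v)$ produces $|C|$ coded elements, any $k$ of which (from the same encoding) recover $v$. Tags are pairs $(z,w)$, $z\in\mathbb{N}$, $w$ a writer identifier, ordered lexicographically; $t_0$ initial tag. A parameter $\delta\ge1$ is fixed. A quorum is any subset of $C$ of size $\lceil (2|C|+k)/3\rceil$. State. Each flexnode keeps a set $List$ of signed triples $(\langle t,e\rangle,\sigma)$, initially holding the initial pair with tag $t_0$. Primitives (by flexnode $p$): get-tag: query all, each replies with its signed max-tag entry, wait for a quorum, return the maximum verified tag. put-data$(\langle t,v\rangle)$: encode $v$ into $e_1,\dots,e_{|C|}$, send signed $\langle t,e_j\rangle$ to the $j$-th flexnode; a receiver adds it to $List$ if the signature verifies and no entry with tag $t$ exists, then if $|List|>\delta+1$ removes the entries with minimum tag, and acknowledges; wait for a quorum of acknowledgements. get-data: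 query all, each replies with its $List$, wait for a quorum, keep verified pairs, take the maximum tag appearing in at least $k$ received lists, decode and return it; if no such tag exists the primitive does not complete. Operations: read = get-data then put-data of the obtained pair, returning it; write$(v)$ by $w$ = get-tag returning $t$, then put-data$(\langle (t.z+1,w),v\rangle)$. Two operations are concurrent if neither's response precedes the other's invocation. *)

theory Defs
  imports Complex_Main "HOL-Library.Product_Lexorder"
begin

text \<open>
  Flexnodes have type 'n, client process /
  writer identifiers type 'w (linearly ordered, so that tags (z,w) are ordered
  lexicographically via Product_Lexorder), values 'v, coded elements 'e.  Asynchrony, message delays and
  crashes of clients are captured by the fact that steps are interleaved
  arbitrarily and nothing forces any step to happen.
\<close>

type_synonym 'w tag = "nat \<times> 'w"

datatype okind = Rd | Wr

text \<open>PGetTag v R: a write of value v in its get-tag primitive; R j = verified tags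
    received from flexnode j (at most one).
  PGetData R: a read in its get-data primitive; R j = verified pairs of the list
    received from flexnode j.
  PPut t v A: put-data of the pair (t,v); A = flexnodes that acknowledged.\<close>
datatype ('n, 'w, 'v, 'e) phase =
    PGetTag 'v "'n \<Rightarrow> 'w tag set option"
  | PGetData "'n \<Rightarrow> ('w tag \<times> 'e) set option"
  | PPut "'w tag" 'v "'n set"
  | PDone "'w tag" 'v

record ('n, 'w, 'v, 'e) opst =
  kind :: okind
  proc :: 'w
  inv  :: nat
  resp :: "nat option"
  phase :: "('n, 'w, 'v, 'e) phase"

record ('n, 'w, 'v, 'e) state =
  lists :: "'n \<Rightarrow> ('w tag \<times> 'e) set"
  ops   :: "nat \<Rightarrow> ('n, 'w, 'v, 'e) opst option"
  clock :: nat

definition qsize :: "nat \<Rightarrow> nat \<Rightarrow> nat" where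
  "qsize n k = nat \<lceil>(2 * real n + real k) / 3\<rceil>"

definition add_entry :: "nat \<Rightarrow> ('w::linorder tag \<times> 'e) set \<Rightarrow> ('w tag \<times> 'e) \<Rightarrow> ('w tag \<times> 'e) set" where
  "add_entry \<delta> L p =
     (if \<exists>e. (fst p, e) \<in> L then L
      else (let L' = insert p L in
            if card L' > \<delta> + 1 then {x \<in> L'. fst x \<noteq> Min (fst ` L')} else L'))"

text \<open>Pairs carrying a valid (unforgeable) signature: the initial pairs and the
  pairs sent by put-data primitives of (protocol-following) operations.\<close>
definition signed :: "'n set \<Rightarrow> ('v \<Rightarrow> 'n \<Rightarrow> 'e) \<Rightarrow> 'w tag \<Rightarrow> 'v
      \<Rightarrow> ('n, 'w, 'v, 'e) state \<Rightarrow> ('w tag \<times> 'e) set" where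
  "signed C enc t0 v0 s =
     {(t0, enc v0 j) | j. j \<in> C} \<union>
     {(t, enc v j) | t v j. j \<in> C \<and>
        (\<exists>o' op A. ops s o' = Some op \<and> (phase op = PPut t v A \<or> phase op = PDone t v))}"

text \<open>Outcome of get-data on the lists R received from quorum Q: the maximum tag
  appearing in at least k received lists together with the value decoded from
  the received coded elements with that tag; None if no such tag exists (then
  the primitive does not complete).\<close>
definition get_data_result :: "nat \<Rightarrow> (('n \<times> 'e) set \<Rightarrow> 'v) \<Rightarrow> 'n set
      \<Rightarrow> ('n \<Rightarrow> ('w::linorder tag \<times> 'e) set option) \<Rightarrow> ('w tag \<times> 'v) option" where
  "get_data_result k dec Q R =
     (let T = {t. k \<le> card {j \<in> Q. \<exists>e. (t, e) \<in> the (R j)}} in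
      if T = {} then None
      else Some (Max T, dec {(j, e). j \<in> Q \<and> (Max T, e) \<in> the (R j)}))"

definition init :: "'n set \<Rightarrow> ('v \<Rightarrow> 'n \<Rightarrow> 'e) \<Rightarrow> 'w tag \<Rightarrow> 'v \<Rightarrow> ('n, 'w, 'v, 'e) state" where
  "init C enc t0 v0 = \<lparr>lists = (\<lambda>j. {(t0, enc v0 j)}), ops = (\<lambda>_. None), clock = 0\<rparr>"

definition set_phase :: "('n, 'w, 'v, 'e) state \<Rightarrow> nat \<Rightarrow> ('n, 'w, 'v, 'e) opst
      \<Rightarrow> ('n, 'w, 'v, 'e) phase \<Rightarrow> ('n, 'w, 'v, 'e) state" where
  "set_phase s o' op ph =
     s\<lparr>ops := (ops s)(o' \<mapsto> op\<lparr>phase := ph\<rparr>), clock := Suc (clock s)\<rparr>"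

text \<open>Parameters: the flexnode set C, the Byzantine
  set B, code dimension k, parameter \<delta>, encoding enc (enc v j = j-th coded
  element), decoding dec, initial tag t0 and initial value v0.\<close>
inductive step :: "'n set \<Rightarrow> 'n set \<Rightarrow> nat \<Rightarrow> nat \<Rightarrow> ('v \<Rightarrow> 'n \<Rightarrow> 'e)
     \<Rightarrow> (('n \<times> 'e) set \<Rightarrow> 'v) \<Rightarrow> 'w::linorder tag \<Rightarrow> 'v
     \<Rightarrow> ('n, 'w, 'v, 'e) state \<Rightarrow> ('n, 'w, 'v, 'e) state \<Rightarrow> bool"
  for C B k \<delta> enc dec t0 v0
where
  invoke_write:
    "ops s o' = None \<Longrightarrow>
     step C B k \<delta> enc dec t0 v0 s
       (s\<lparr>ops := (ops s)(o' \<mapsto> \<lparr>kind = Wr, proc = w, inv = clock s, resp = None,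
                                  phase = PGetTag v (\<lambda>_. None)\<rparr>),
          clock := Suc (clock s)\<rparr>)"
| invoke_read:
    "ops s o' = None \<Longrightarrow>
     step C B k \<delta> enc dec t0 v0 s
       (s\<lparr>ops := (ops s)(o' \<mapsto> \<lparr>kind = Rd, proc = w, inv = clock s, resp = None,
                                  phase = PGetData (\<lambda>_. None)\<rparr>),
          clock := Suc (clock s)\<rparr>)"
| tag_reply_honest:
    "\<lbrakk>ops s o' = Some op; phase op = PGetTag v R; j \<in> C - B; R j = None\<rbrakk> \<Longrightarrow>
     step C B k \<delta> enc dec t0 v0 s
       (set_phase s o' op (PGetTag v (R(j := Some {Max (fst ` lists s j)}))))"
| tag_reply_byz:
    "\<lbrakk>ops s o' = Some op; phase op = PGetTag v R; j \<in> B; R j = None;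
      X \<subseteq> fst ` signed C enc t0 v0 s; card X \<le> 1\<rbrakk> \<Longrightarrow>
     step C B k \<delta> enc dec t0 v0 s (set_phase s o' op (PGetTag v (R(j := Some X))))"
| tag_done:
    "\<lbrakk>ops s o' = Some op; phase op = PGetTag v R; Q \<subseteq> C; card Q = qsize (card C) k;
      \<forall>j\<in>Q. R j \<noteq> None;
      t = Max (\<Union>j\<in>Q. the (R j))\<rbrakk> \<Longrightarrow>
     step C B k \<delta> enc dec t0 v0 s
       (set_phase s o' op (PPut (Suc (fst t), proc op) v {}))"
| data_reply_honest:
    "\<lbrakk>ops s o' = Some op; phase op = PGetData R; j \<in> C - B; R j = None\<rbrakk> \<Longrightarrow>
     step C B k \<delta> enc dec t0 v0 s (set_phase s o' op (PGetData (R(j := Some (lists s j)))))"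
| data_reply_byz:
    "\<lbrakk>ops s o' = Some op; phase op = PGetData R; j \<in> B; R j = None;
      L \<subseteq> signed C enc t0 v0 s\<rbrakk> \<Longrightarrow>
     step C B k \<delta> enc dec t0 v0 s (set_phase s o' op (PGetData (R(j := Some L))))"
| data_done:
    "\<lbrakk>ops s o' = Some op; phase op = PGetData R; Q \<subseteq> C; card Q = qsize (card C) k;
      \<forall>j\<in>Q. R j \<noteq> None; get_data_result k dec Q R = Some (t, v)\<rbrakk> \<Longrightarrow>
     step C B k \<delta> enc dec t0 v0 s (set_phase s o' op (PPut t v {}))"
| put_deliver:
    "\<lbrakk>ops s o' = Some op; phase op = PPut t v A; j \<in> C - B; j \<notin> A\<rbrakk> \<Longrightarrow>
     step C B k \<delta> enc dec t0 v0 s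
       ((set_phase s o' op (PPut t v (insert j A)))
          \<lparr>lists := (lists s)(j := add_entry \<delta> (lists s j) (t, enc v j))\<rparr>)"
| put_ack_byz:
    "\<lbrakk>ops s o' = Some op; phase op = PPut t v A; j \<in> B; j \<notin> A\<rbrakk> \<Longrightarrow>
     step C B k \<delta> enc dec t0 v0 s (set_phase s o' op (PPut t v (insert j A)))"
| byz_put:
    "\<lbrakk>j \<in> C - B; p \<in> signed C enc t0 v0 s\<rbrakk> \<Longrightarrow>
     step C B k \<delta> enc dec t0 v0 s
       (s\<lparr>lists := (lists s)(j := add_entry \<delta> (lists s j) p), clock := Suc (clock s)\<rparr>)"
| put_done:
    "\<lbrakk>ops s o' = Some op; phase op = PPut t v A; card A \<ge> qsize (card C) k\<rbrakk> \<Longrightarrow>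
     step C B k \<delta> enc dec t0 v0 s
       (s\<lparr>ops := (ops s)(o' \<mapsto> op\<lparr>phase := PDone t v, resp := Some (clock s)\<rparr>),
          clock := Suc (clock s)\<rparr>)"

definition reachable where
  "reachable C B k \<delta> enc dec t0 v0 s \<longleftrightarrow>
     (step C B k \<delta> enc dec t0 v0)\<^sup>*\<^sup>* (init C enc t0 v0) s"

definition precedes :: "('n, 'w, 'v, 'e) opst \<Rightarrow> ('n, 'w, 'v, 'e) opst \<Rightarrow> bool" where
  "precedes a c \<longleftrightarrow> (\<exists>r. resp a = Some r \<and> r < inv c)"

definition concurrent :: "('n, 'w, 'v, 'e) opst \<Rightarrow> ('n, 'w, 'v, 'e) opst \<Rightarrow> bool" where
  "concurrent a c \<longleftrightarrow> \<not> precedes a c \<and> \<not> precedes c a"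

end

theory Submission
  imports Defs
begin


definition Good :: "nat \<Rightarrow> ('w::linorder tag \<times> 'e) set \<Rightarrow> 'w tag \<Rightarrow> bool" where
  "Good \<delta> L t \<longleftrightarrow> (\<exists>e. (t,e) \<in> L) \<or> \<delta>+1 \<le> card {t'\<in>fst`L. t < t'}"

lemma AE1: "finite L \<Longrightarrow> finite (add_entry \<delta> L p)"
  unfolding add_entry_def Let_def by auto

lemma AE2: assumes "inj_on fst L" shows "inj_on fst (add_entry \<delta> L p)"
proof (cases "\<exists>e. (fst p, e) \<in> L")
  case True
  then show ?thesis using assms unfolding add_entry_def by auto
next
  case False
  have i: "inj_on fst (insert p L)" using assms False
    by (auto simp: inj_on_def image_iff)
  show ?thesis using False unfolding add_entry_def Let_def
    using inj_on_subset[OF i] by (simp add: subset_iff)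
qed

lemma AE3: "fst ` add_entry \<delta> L p \<subseteq> insert (fst p) (fst ` L)"
  unfolding add_entry_def Let_def by auto

lemma Good_filter:
  fixes L :: "('w::linorder tag \<times> 'e) set"
  assumes fin: "finite L" and inj: "inj_on fst L" and G: "Good \<delta> L t" and c: "card L > \<delta>+1"
  shows "Good \<delta> {x\<in>L. fst x \<noteq> Min (fst ` L)} t"
proof -
  define m where "m = Min (fst ` L)"
  have ne: "L \<noteq> {}" using c by auto
  have ft: "finite (fst ` L)" using fin by auto
  have mle: "\<And>x. x \<in> fst ` L \<Longrightarrow> m \<le> x" unfolding m_def using ft by auto
  have mi: "m \<in> fst ` L" unfolding m_def using ft ne by auto
  have img: "fst ` {x\<in>L. fst x \<noteq> m} = fst ` L - {m}" by auto
  have cimg: "card (fst ` L) = card L" using inj by (simp add: card_image)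
  have cm: "card (fst ` L - {m}) = card L - 1" using mi ft cimg by simp
  have "Good \<delta> {x\<in>L. fst x \<noteq> m} t"
  proof (cases "t < m")
    case True
    have "{t'\<in>fst ` L - {m}. t < t'} = fst ` L - {m}" using mle True by force
    then show ?thesis using cm c unfolding Good_def img by auto
  next
    case False
    show ?thesis
    proof (cases "t = m")
      case True
      have "{t'\<in>fst ` L - {m}. t < t'} = fst ` L - {m}" using mle True by force
      then show ?thesis using cm c unfolding Good_def img by auto
    next
      case False2: False
      have "{t'\<in>fst ` L - {m}. t < t'} = {t'\<in>fst ` L. t < t'}" using False by auto
      moreover have "(\<exists>e. (t,e) \<in> L) \<Longrightarrow> (\<exists>e. (t,e) \<in> {x\<in>L. fst x \<noteq> m})" using False2 by auto
      ultimately show ?thesis using G unfolding Good_def img by auto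
    qed
  qed
  then show ?thesis unfolding m_def .
qed

lemma Good_insert:
  assumes "finite L" "Good \<delta> L t \<or> fst p = t"
  shows "Good \<delta> (insert p L) t"
proof -
  have "card {t'\<in>fst`L. t < t'} \<le> card {t'\<in>fst`(insert p L). t < t'}"
    using assms by (intro card_mono) auto
  then show ?thesis using assms unfolding Good_def by (cases p) force
qed

lemma AE4:
  assumes "finite L" "inj_on fst L" "Good \<delta> L t \<or> fst p = t"
  shows "Good \<delta> (add_entry \<delta> L p) t"
proof (cases "\<exists>e. (fst p, e) \<in> L")
  case True
  then show ?thesis using assms unfolding add_entry_def Good_def by auto
next
  case False
  have f: "finite (insert p L)" using assms by auto
  have i: "inj_on fst (insert p L)" using assms False
    by (auto simp: inj_on_def image_iff)
  have g: "Good \<delta> (insert p L) t" using Good_insert assms by blast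
  show ?thesis using False Good_filter[OF f i g] g unfolding add_entry_def Let_def by auto
qed

fun ptag :: "('n, 'w, 'v, 'e) phase \<Rightarrow> 'w tag option" where
  "ptag (PPut t v A) = Some t" | "ptag (PDone t v) = Some t" | "ptag _ = None"

definition TS :: "('n, 'w, 'v, 'e) state \<Rightarrow> 'w tag \<Rightarrow> 'w tag set" where
  "TS s t0 = insert t0 {t. \<exists>i op. ops s i = Some op \<and> ptag (phase op) = Some t}"

definition Tb :: "('n, 'w, 'v, 'e) state \<Rightarrow> nat \<Rightarrow> 'w tag set" where
  "Tb s I = {t. \<exists>i op v r. ops s i = Some op \<and> phase op = PDone t v \<and> resp op = Some r \<and> r < I}"

lemma signed_TS: "fst ` signed C enc t0 v0 s \<subseteq> TS s t0"
  unfolding signed_def TS_def by force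

lemma L_clock: "step C B k \<delta> enc dec t0 v0 s s' \<Longrightarrow> clock s' = Suc (clock s)"
  by (induction rule: step.induct) (auto simp: set_phase_def)

lemma L_lists: "step C B k \<delta> enc dec t0 v0 s s' \<Longrightarrow>
   lists s' j = lists s j \<or> (j \<in> C - B \<and> (\<exists>p. fst p \<in> TS s t0 \<and> lists s' j = add_entry \<delta> (lists s j) p))"
proof (induction rule: step.induct)
  case (put_deliver s o' op t v A j')
  have "t \<in> TS s t0" using put_deliver unfolding TS_def by force
  show ?case
  proof (cases "j = j'")
    case True
    have "lists (set_phase s o' op (PPut t v (insert j' A))
          \<lparr>lists := (lists s)(j' := add_entry \<delta> (lists s j') (t, enc v j'))\<rparr>) j
       = add_entry \<delta> (lists s j) (t, enc v j)" using True by simp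
    then show ?thesis using True put_deliver \<open>t \<in> TS s t0\<close> by (metis fst_conv DiffI)
  qed (simp add: set_phase_def)
next
  case (byz_put j' p s)
  have "fst p \<in> TS s t0" using signed_TS[of C enc t0 v0 s] byz_put by auto
  then show ?case using byz_put
  proof (cases "j = j'")
    case True
    then show ?thesis using byz_put \<open>fst p \<in> TS s t0\<close> by simp (metis prod.collapse)
  qed simp
qed (auto simp: set_phase_def)

lemma L_ops: "step C B k \<delta> enc dec t0 v0 s s' \<Longrightarrow> ops s i = Some op \<Longrightarrow>
   \<exists>op'. ops s' i = Some op' \<and> kind op' = kind op \<and> inv op' = inv op \<and>
     (ptag (phase op) \<noteq> None \<longrightarrow> ptag (phase op') = ptag (phase op)) \<and>
     (\<forall>t v. phase op = PDone t v \<longrightarrow> op' = op)"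
  by (induction rule: step.induct) (auto simp: set_phase_def)

lemma L_TS: "step C B k \<delta> enc dec t0 v0 s s' \<Longrightarrow> TS s t0 \<subseteq> TS s' t0"
  unfolding TS_def using L_ops by fastforce

definition I_fin :: "('n, 'w, 'v, 'e) state \<Rightarrow> bool" where
  "I_fin s \<longleftrightarrow> finite (dom (ops s))"

definition I_ops :: "('n, 'w, 'v, 'e) state \<Rightarrow> bool" where
  "I_ops s \<longleftrightarrow> (\<forall>i op. ops s i = Some op \<longrightarrow> inv op < clock s \<and> (\<forall>r. resp op = Some r \<longrightarrow> r < clock s)
     \<and> (resp op = None \<longleftrightarrow> (\<forall>t v. phase op \<noteq> PDone t v)) \<and> (\<forall>v R. phase op = PGetTag v R \<longrightarrow> kind op = Wr))"

definition I_lists :: "('n, 'w::linorder, 'v, 'e) state \<Rightarrow> 'w tag \<Rightarrow> bool" where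
  "I_lists s t0 \<longleftrightarrow> (\<forall>j. finite (lists s j) \<and> inj_on fst (lists s j) \<and> fst ` lists s j \<subseteq> TS s t0)"

definition I_wtag :: "('n, 'w::linorder, 'v, 'e) state \<Rightarrow> 'w tag \<Rightarrow> bool" where
  "I_wtag s t0 \<longleftrightarrow> (\<forall>i op t. ops s i = Some op \<longrightarrow> ptag (phase op) = Some t \<longrightarrow>
     t = t0 \<or> (\<exists>w opw. ops s w = Some opw \<and> kind opw = Wr \<and> ptag (phase opw) = Some t))"

definition I_put :: "'n set \<Rightarrow> 'n set \<Rightarrow> nat \<Rightarrow> ('n, 'w::linorder, 'v, 'e) state \<Rightarrow> bool" where
  "I_put C B \<delta> s \<longleftrightarrow> (\<forall>i op t v A. ops s i = Some op \<longrightarrow> phase op = PPut t v A \<longrightarrow>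
     A \<subseteq> C \<and> (\<forall>j\<in>A-B. Good \<delta> (lists s j) t))"

definition I_done :: "'n set \<Rightarrow> 'n set \<Rightarrow> nat \<Rightarrow> nat \<Rightarrow> 'w tag \<Rightarrow> ('n, 'w::linorder, 'v, 'e) state \<Rightarrow> bool" where
  "I_done C B k \<delta> t0 s \<longleftrightarrow> (\<forall>t \<in> insert t0 (Tb s (clock s)). \<exists>G \<subseteq> C-B.
     qsize (card C) k \<le> card G + card B \<and> (\<forall>j\<in>G. Good \<delta> (lists s j) t))"

definition I_read :: "'n set \<Rightarrow> 'n set \<Rightarrow> nat \<Rightarrow> nat \<Rightarrow> 'w tag \<Rightarrow> ('n, 'w::linorder, 'v, 'e) state \<Rightarrow> bool" where
  "I_read C B k \<delta> t0 s \<longleftrightarrow> (\<forall>i op R. ops s i = Some op \<longrightarrow> phase op = PGetData R \<longrightarrow>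
     (\<forall>j L. R j = Some L \<longrightarrow> fst ` L \<subseteq> TS s t0) \<and>
     (\<forall>t \<in> insert t0 (Tb s (inv op)). \<exists>G \<subseteq> C-B. qsize (card C) k \<le> card G + card B \<and>
        (\<forall>j\<in>G. Good \<delta> (lists s j) t \<and> (\<forall>L. R j = Some L \<longrightarrow> Good \<delta> L t))))"

definition Inv where
  "Inv C B k \<delta> t0 s \<longleftrightarrow> I_fin s \<and> I_ops s \<and> I_lists s t0 \<and> I_wtag s t0 \<and> I_put C B \<delta> s
     \<and> I_done C B k \<delta> t0 s \<and> I_read C B k \<delta> t0 s"

lemma L_good: "step C B k \<delta> enc dec t0 v0 s s' \<Longrightarrow> I_lists s t0 \<Longrightarrow> Good \<delta> (lists s j) t \<Longrightarrow>
   Good \<delta> (lists s' j) t"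
  using L_lists[of C B k \<delta> enc dec t0 v0 s s' j] AE4 unfolding I_lists_def by metis



lemma P_fin: "step C B k \<delta> enc dec t0 v0 s s' \<Longrightarrow> I_fin s \<Longrightarrow> I_fin s'"
  unfolding I_fin_def by (induction rule: step.induct) (auto simp: set_phase_def)

lemma P_ops: "step C B k \<delta> enc dec t0 v0 s s' \<Longrightarrow> I_ops s \<Longrightarrow> I_ops s'"
proof (induction rule: step.induct)
  case (invoke_write s o' w v)
  then show ?case unfolding I_ops_def by (auto simp: less_Suc_eq)
next
  case (invoke_read s o' w)
  then show ?case unfolding I_ops_def by (auto simp: less_Suc_eq)
next
  case (tag_reply_honest s o' op v R j)
  then show ?case unfolding I_ops_def set_phase_def by (auto simp: less_Suc_eq)
next
  case (tag_reply_byz s o' op v R j X)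
  then show ?case unfolding I_ops_def set_phase_def by (auto simp: less_Suc_eq)
next
  case (tag_done s o' op v R Q t)
  then show ?case unfolding I_ops_def set_phase_def by (auto simp: less_Suc_eq)
next
  case (data_reply_honest s o' op R j)
  then show ?case unfolding I_ops_def set_phase_def by (auto simp: less_Suc_eq)
next
  case (data_reply_byz s o' op R j L)
  then show ?case unfolding I_ops_def set_phase_def by (auto simp: less_Suc_eq)
next
  case (data_done s o' op R Q t v)
  then show ?case unfolding I_ops_def set_phase_def by (auto simp: less_Suc_eq)
next
  case (put_deliver s o' op t v A j)
  then show ?case unfolding I_ops_def set_phase_def by (auto simp: less_Suc_eq)
next
  case (put_ack_byz s o' op t v A j)
  then show ?case unfolding I_ops_def set_phase_def by (auto simp: less_Suc_eq)
next
  case (byz_put j p s)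
  then show ?case unfolding I_ops_def set_phase_def by (auto simp: less_Suc_eq)
next
  case (put_done s o' op t v A)
  then show ?case unfolding I_ops_def set_phase_def by (auto simp: less_Suc_eq)
qed


lemma P_lists: "step C B k \<delta> enc dec t0 v0 s s' \<Longrightarrow> I_lists s t0 \<Longrightarrow> I_lists s' t0"
proof -
  assume st: "step C B k \<delta> enc dec t0 v0 s s'" and I: "I_lists s t0"
  have TS: "TS s t0 \<subseteq> TS s' t0" using L_TS[OF st] .
  show "I_lists s' t0" unfolding I_lists_def
  proof
    fix j
    from L_lists[OF st, of j] show "finite (lists s' j) \<and> inj_on fst (lists s' j) \<and> fst ` lists s' j \<subseteq> TS s' t0"
    proof
      assume "lists s' j = lists s j" then show ?thesis using I TS unfolding I_lists_def by auto
    next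
      assume "j \<in> C - B \<and> (\<exists>p. fst p \<in> TS s t0 \<and> lists s' j = add_entry \<delta> (lists s j) p)"
      then obtain p where p: "fst p \<in> TS s t0" "lists s' j = add_entry \<delta> (lists s j) p" by blast
      have a: "finite (lists s j)" "inj_on fst (lists s j)" "fst ` lists s j \<subseteq> TS s t0"
        using I unfolding I_lists_def by auto
      have "insert (fst p) (fst ` lists s j) \<subseteq> TS s' t0" using a(3) p(1) TS by blast
      then have "fst ` lists s' j \<subseteq> TS s' t0"
        unfolding p(2) using AE3[of \<delta> "lists s j" p] by (rule subset_trans[rotated])
      then show ?thesis using AE1[OF a(1)] AE2[OF a(2)] unfolding p(2) by blast
    qed
  qed
qed


lemma sp_ops[simp]: "ops (set_phase s o' op ph) i = (if i = o' then Some (op\<lparr>phase := ph\<rparr>) else ops s i)"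
  unfolding set_phase_def by simp
lemma sp_lists[simp]: "lists (set_phase s o' op ph) = lists s"
  unfolding set_phase_def by simp
lemma sp_clock[simp]: "clock (set_phase s o' op ph) = Suc (clock s)"
  unfolding set_phase_def by simp

lemma L_ptag: "step C B k \<delta> enc dec t0 v0 s s' \<Longrightarrow> ops s' i = Some op' \<Longrightarrow> ptag (phase op') = Some t \<Longrightarrow>
   (\<exists>op. ops s i = Some op \<and> ptag (phase op) = Some t) \<or>
   (\<exists>op v R. ops s i = Some op \<and> phase op = PGetTag v R \<and> kind op' = kind op) \<or>
   (\<exists>op R Q v. ops s i = Some op \<and> phase op = PGetData R \<and> Q \<subseteq> C \<and> (\<forall>j\<in>Q. R j \<noteq> None) \<and>
       get_data_result k dec Q R = Some (t, v))"
proof (induction rule: step.induct)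
  case (invoke_write s o' w v)
  then show ?case by (cases "i = o'") auto
next
  case (invoke_read s o' w)
  then show ?case by (cases "i = o'") auto
next
  case (tag_reply_honest s o' op v R j)
  then show ?case by (cases "i = o'") auto
next
  case (tag_reply_byz s o' op v R j X)
  then show ?case by (cases "i = o'") auto
next
  case (tag_done s o' op v R Q tt)
  then show ?case by (cases "i = o'") auto
next
  case (data_reply_honest s o' op R j)
  then show ?case by (cases "i = o'") auto
next
  case (data_reply_byz s o' op R j L)
  then show ?case by (cases "i = o'") auto
next
  case (data_done s o' op R Q tt v)
  show ?case
  proof (cases "i = o'")
    case True
    then have "op' = op\<lparr>phase := PPut tt v {}\<rparr>" using data_done by simp
    then have "t = tt" using data_done.prems by simp
    then show ?thesis using True data_done(1-3,5,6)
      by (intro disjI2 exI[of _ op] exI[of _ R] exI[of _ Q] exI[of _ v]) simp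
  next
    case False
    then show ?thesis using data_done by simp
  qed
next
  case (put_deliver s o' op tt v A j)
  then show ?case by (cases "i = o'") auto
next
  case (put_ack_byz s o' op tt v A j)
  then show ?case by (cases "i = o'") auto
next
  case (byz_put j p s)
  then show ?case by auto
next
  case (put_done s o' op tt v A)
  then show ?case by (cases "i = o'") auto
qed

lemma TS_fin: "I_fin s \<Longrightarrow> finite (TS s t0)"
proof -
  assume "I_fin s"
  have "{t. \<exists>i op. ops s i = Some op \<and> ptag (phase op) = Some t}
        \<subseteq> (\<lambda>i. the (ptag (phase (the (ops s i))))) ` dom (ops s)" by force
  then show ?thesis using \<open>I_fin s\<close> unfolding TS_def I_fin_def by (meson finite_imageI finite_insert finite_subset)
qed

lemma Tb_TS: "Tb s I \<subseteq> TS s t0"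
  unfolding Tb_def TS_def by force

lemma gdr_TS:
  assumes "get_data_result k dec Q R = Some (t, v)" "1 \<le> k" "finite X"
    "\<forall>j\<in>Q. \<forall>L. R j = Some L \<longrightarrow> fst ` L \<subseteq> X" "\<forall>j\<in>Q. R j \<noteq> None"
  shows "t \<in> X"
proof -
  define T where "T = {t. k \<le> card {j \<in> Q. \<exists>e. (t, e) \<in> the (R j)}}"
  have "get_data_result k dec Q R = (if T = {} then None
      else Some (Max T, dec {(j, e). j \<in> Q \<and> (Max T, e) \<in> the (R j)}))"
    unfolding get_data_result_def T_def Let_def by (rule refl)
  note eq = this
  have ne: "T \<noteq> {}"
  proof
    assume "T = {}" then show False using assms(1) eq by simp
  qed
  have tt: "t = Max T" using assms(1) eq ne by simp
  have sub: "T \<subseteq> X"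
  proof
    fix t' assume "t' \<in> T"
    then have "k \<le> card {j \<in> Q. \<exists>e. (t', e) \<in> the (R j)}" unfolding T_def by simp
    then have "card {j \<in> Q. \<exists>e. (t', e) \<in> the (R j)} \<noteq> 0" using assms(2) by linarith
    then have "{j \<in> Q. \<exists>e. (t', e) \<in> the (R j)} \<noteq> {}" by (metis card.empty)
    then obtain j e where "j \<in> Q" "(t', e) \<in> the (R j)" by blast
    moreover then obtain L where "R j = Some L" using assms(5) by blast
    ultimately have "(t', e) \<in> L" "fst ` L \<subseteq> X" using assms(4) by auto
    then show "t' \<in> X" by force
  qed
  then have "finite T" using assms(3) finite_subset by blast
  then have "Max T \<in> T" using ne by simp
  then show ?thesis using tt sub by blast
qed

lemma wit_transfer: "step C B k \<delta> enc dec t0 v0 s s' \<Longrightarrow> I_wtag s t0 \<Longrightarrow> t \<in> TS s t0 \<Longrightarrow>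
   t = t0 \<or> (\<exists>w opw. ops s' w = Some opw \<and> kind opw = Wr \<and> ptag (phase opw) = Some t)"
proof -
  assume st: "step C B k \<delta> enc dec t0 v0 s s'" and I: "I_wtag s t0" and t: "t \<in> TS s t0"
  show ?thesis
  proof (cases "t = t0")
    case False
    then obtain i op where "ops s i = Some op" "ptag (phase op) = Some t" using t unfolding TS_def by auto
    then obtain w opw where w: "ops s w = Some opw" "kind opw = Wr" "ptag (phase opw) = Some t"
      using I False unfolding I_wtag_def by blast
    from L_ops[OF st w(1)] obtain opw' where "ops s' w = Some opw'" "kind opw' = kind opw"
      "ptag (phase opw) \<noteq> None \<longrightarrow> ptag (phase opw') = ptag (phase opw)" by blast
    then show ?thesis using w by auto
  qed simp
qed

lemma P_wtag:
  assumes st: "step C B k \<delta> enc dec t0 v0 s s'" and I: "I_wtag s t0" "I_ops s" "I_read C B k \<delta> t0 s" "I_fin s"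
    and k: "1 \<le> k"
  shows "I_wtag s' t0"
  unfolding I_wtag_def
proof (intro allI impI)
  fix i op' t assume o: "ops s' i = Some op'" and p: "ptag (phase op') = Some t"
  from L_ptag[OF st o p] show "t = t0 \<or> (\<exists>w opw. ops s' w = Some opw \<and> kind opw = Wr \<and> ptag (phase opw) = Some t)"
  proof (elim disjE exE conjE)
    fix op assume "ops s i = Some op" "ptag (phase op) = Some t"
    then have "t \<in> TS s t0" unfolding TS_def by blast
    then show ?thesis using wit_transfer[OF st I(1)] by blast
  next
    fix op v R assume "ops s i = Some op" "phase op = PGetTag v R" "kind op' = kind op"
    then have "kind op' = Wr" using I(2) unfolding I_ops_def by auto
    then show ?thesis using o p by blast
  next
    fix op R Q v assume a: "ops s i = Some op" "phase op = PGetData R" "Q \<subseteq> C" "\<forall>j\<in>Q. R j \<noteq> None"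
       "get_data_result k dec Q R = Some (t, v)"
    have "\<forall>j\<in>Q. \<forall>L. R j = Some L \<longrightarrow> fst ` L \<subseteq> TS s t0" using I(3) a(1,2) unfolding I_read_def by blast
    then have "t \<in> TS s t0" using gdr_TS[OF a(5) k TS_fin[OF I(4)]] a(4) by blast
    then show ?thesis using wit_transfer[OF st I(1)] by blast
  qed
qed

lemma L_put: "step C B k \<delta> enc dec t0 v0 s s' \<Longrightarrow> ops s' i = Some op' \<Longrightarrow> phase op' = PPut t v A' \<Longrightarrow>
   A' = {} \<or> (\<exists>op A. ops s i = Some op \<and> phase op = PPut t v A \<and> (A' = A \<or> (\<exists>j. A' = insert j A \<and>
      (j \<in> B \<or> (j \<in> C - B \<and> lists s' j = add_entry \<delta> (lists s j) (t, enc v j))))))"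
proof (induction rule: step.induct)
  case (invoke_write s o' w v)
  then show ?case by (cases "i = o'") auto
next
  case (invoke_read s o' w)
  then show ?case by (cases "i = o'") auto
next
  case (tag_reply_honest s o' op v R j)
  then show ?case by (cases "i = o'") auto
next
  case (tag_reply_byz s o' op v R j X)
  then show ?case by (cases "i = o'") auto
next
  case (tag_done s o' op v R Q tt)
  then show ?case by (cases "i = o'") auto
next
  case (data_reply_honest s o' op R j)
  then show ?case by (cases "i = o'") auto
next
  case (data_reply_byz s o' op R j L)
  then show ?case by (cases "i = o'") auto
next
  case (data_done s o' op R Q tt v)
  then show ?case by (cases "i = o'") auto
next
  case (put_deliver s o' op tt vv A j)
  then show ?case by (cases "i = o'") auto
next
  case (put_ack_byz s o' op tt vv A j)
  then show ?case by (cases "i = o'") auto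
next
  case (byz_put j p s)
  then show ?case by auto
next
  case (put_done s o' op tt vv A)
  then show ?case by (cases "i = o'") auto
qed

lemma P_put:
  assumes st: "step C B k \<delta> enc dec t0 v0 s s'" and I: "I_put C B \<delta> s" "I_lists s t0" and BC: "B \<subseteq> C"
  shows "I_put C B \<delta> s'"
  unfolding I_put_def
proof (intro allI impI)
  fix i op' t v A' assume o: "ops s' i = Some op'" and p: "phase op' = PPut t v A'"
  from L_put[OF st o p] show "A' \<subseteq> C \<and> (\<forall>j\<in>A' - B. Good \<delta> (lists s' j) t)"
  proof (elim disjE exE conjE)
    assume "A' = {}" then show ?thesis by simp
  next
    fix op A assume a: "ops s i = Some op" "phase op = PPut t v A"
    then have old: "A \<subseteq> C" "\<forall>j\<in>A-B. Good \<delta> (lists s j) t" using I(1) unfolding I_put_def by blast+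
    then have old': "\<forall>j\<in>A-B. Good \<delta> (lists s' j) t" using L_good[OF st I(2)] by blast
    {
      assume "A' = A" then show ?thesis using old old' by simp
    next
      fix j assume "A' = insert j A" "j \<in> B"
      then show ?thesis using old old' BC by auto
    next
      fix j assume j: "A' = insert j A" "j \<in> C - B" "lists s' j = add_entry \<delta> (lists s j) (t, enc v j)"
      have "finite (lists s j)" "inj_on fst (lists s j)" using I(2) unfolding I_lists_def by auto
      then have "Good \<delta> (lists s' j) t" using AE4 j(3) by (metis fst_conv)
      then show ?thesis using old old' j by auto
    }
  qed
qed

lemma L_done: "step C B k \<delta> enc dec t0 v0 s s' \<Longrightarrow> ops s' i = Some op' \<Longrightarrow> phase op' = PDone t v \<Longrightarrow>
   ops s i = Some op' \<or> (\<exists>op A. ops s i = Some op \<and> phase op = PPut t v A \<and> qsize (card C) k \<le> card A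
      \<and> resp op' = Some (clock s))"
proof (induction rule: step.induct)
  case (invoke_write s o' w v)
  then show ?case by (cases "i = o'") auto
next
  case (invoke_read s o' w)
  then show ?case by (cases "i = o'") auto
next
  case (tag_reply_honest s o' op v R j)
  then show ?case by (cases "i = o'") auto
next
  case (tag_reply_byz s o' op v R j X)
  then show ?case by (cases "i = o'") auto
next
  case (tag_done s o' op v R Q tt)
  then show ?case by (cases "i = o'") auto
next
  case (data_reply_honest s o' op R j)
  then show ?case by (cases "i = o'") auto
next
  case (data_reply_byz s o' op R j L)
  then show ?case by (cases "i = o'") auto
next
  case (data_done s o' op R Q tt v)
  then show ?case by (cases "i = o'") auto
next
  case (put_deliver s o' op tt vv A j)
  then show ?case by (cases "i = o'") auto
next
  case (put_ack_byz s o' op tt vv A j)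
  then show ?case by (cases "i = o'") auto
next
  case (byz_put j p s)
  then show ?case by auto
next
  case (put_done s o' op tt vv A)
  then show ?case by (cases "i = o'") auto
qed

lemma Tb_mono: "step C B k \<delta> enc dec t0 v0 s s' \<Longrightarrow> I \<le> clock s \<Longrightarrow> Tb s' I \<subseteq> Tb s I"
proof
  fix t assume st: "step C B k \<delta> enc dec t0 v0 s s'" and I: "I \<le> clock s" and "t \<in> Tb s' I"
  then obtain i op' v r where o: "ops s' i = Some op'" "phase op' = PDone t v" "resp op' = Some r" "r < I"
    unfolding Tb_def by blast
  from L_done[OF st o(1,2)] show "t \<in> Tb s I"
  proof
    assume "ops s i = Some op'" then show ?thesis using o unfolding Tb_def by blast
  next
    assume "\<exists>op A. ops s i = Some op \<and> phase op = PPut t v A \<and> qsize (card C) k \<le> card A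
      \<and> resp op' = Some (clock s)"
    then show ?thesis using o I by auto
  qed
qed








lemma P_done:
  assumes st: "step C B k \<delta> enc dec t0 v0 s s'" and I: "I_done C B k \<delta> t0 s" "I_lists s t0" "I_ops s" "I_put C B \<delta> s"
    and fin: "finite C" and BC: "B \<subseteq> C"
  shows "I_done C B k \<delta> t0 s'"
  unfolding I_done_def
proof
  fix t assume t: "t \<in> insert t0 (Tb s' (clock s'))"
  have old: "\<exists>G\<subseteq>C - B. qsize (card C) k \<le> card G + card B \<and> (\<forall>j\<in>G. Good \<delta> (lists s' j) t)"
    if "t \<in> insert t0 (Tb s (clock s))"
  proof -
    have "\<exists>G\<subseteq>C - B. qsize (card C) k \<le> card G + card B \<and> (\<forall>j\<in>G. Good \<delta> (lists s j) t)"
      using bspec[OF I(1)[unfolded I_done_def] that] .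
    then obtain G where G: "G \<subseteq> C - B" "qsize (card C) k \<le> card G + card B" "\<forall>j\<in>G. Good \<delta> (lists s j) t"
      by blast
    have "\<forall>j\<in>G. Good \<delta> (lists s' j) t" using L_good[OF st I(2)] G(3) by blast
    then show ?thesis using G(1,2) by blast
  qed
  show "\<exists>G\<subseteq>C - B. qsize (card C) k \<le> card G + card B \<and> (\<forall>j\<in>G. Good \<delta> (lists s' j) t)"
  proof (cases "t = t0")
    case True then show ?thesis using old by simp
  next
    case False
    then obtain i op' v r where o: "ops s' i = Some op'" "phase op' = PDone t v" "resp op' = Some r" "r < clock s'"
      using t unfolding Tb_def by blast
    from L_done[OF st o(1,2)] show ?thesis
    proof
      assume "ops s i = Some op'"
      then have "r < clock s" using I(3) o(3) unfolding I_ops_def by blast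
      then have "t \<in> Tb s (clock s)" using o \<open>ops s i = Some op'\<close> unfolding Tb_def by blast
      then show ?thesis using old by blast
    next
      assume "\<exists>op A. ops s i = Some op \<and> phase op = PPut t v A \<and> qsize (card C) k \<le> card A
        \<and> resp op' = Some (clock s)"
      then obtain op A where a: "ops s i = Some op" "phase op = PPut t v A" "qsize (card C) k \<le> card A" by blast
      then have A: "A \<subseteq> C" "\<forall>j\<in>A-B. Good \<delta> (lists s j) t" using I(4) unfolding I_put_def by blast+
      have fA: "finite A" using A(1) fin finite_subset by blast
      have "card A \<le> card ((A - B) \<union> B)" using fA fin BC
        by (intro card_mono) (simp_all add: finite_subset)
      also have "\<dots> \<le> card (A - B) + card B" by (rule card_Un_le)
      finally have "qsize (card C) k \<le> card (A - B) + card B" using a(3) by linarith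
      moreover have "A - B \<subseteq> C - B" using A(1) by blast
      moreover have "\<forall>j\<in>A-B. Good \<delta> (lists s' j) t" using A(2) L_good[OF st I(2)] by blast
      ultimately show ?thesis by blast
    qed
  qed
qed

lemma L_read: "step C B k \<delta> enc dec t0 v0 s s' \<Longrightarrow> ops s' i = Some op' \<Longrightarrow> phase op' = PGetData R \<Longrightarrow>
   (ops s i = None \<and> inv op' = clock s \<and> R = (\<lambda>_. None)) \<or>
   (\<exists>op R0. ops s i = Some op \<and> phase op = PGetData R0 \<and> inv op' = inv op \<and>
     (R = R0 \<or> (\<exists>j. j \<in> C - B \<and> R = R0(j := Some (lists s j))) \<or>
      (\<exists>j L. j \<in> B \<and> L \<subseteq> signed C enc t0 v0 s \<and> R = R0(j := Some L))))"
proof (induction rule: step.induct)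
  case (invoke_write s o' w v)
  then show ?case by (cases "i = o'") auto
next
  case (invoke_read s o' w)
  then show ?case by (cases "i = o'") auto
next
  case (tag_reply_honest s o' op v R j)
  then show ?case by (cases "i = o'") auto
next
  case (tag_reply_byz s o' op v R j X)
  then show ?case by (cases "i = o'") auto
next
  case (tag_done s o' op v R Q tt)
  then show ?case by (cases "i = o'") auto
next
  case (data_reply_honest s o' op R1 j)
  show ?case
  proof (cases "i = o'")
    case True
    then have "op' = op\<lparr>phase := PGetData (R1(j \<mapsto> lists s j))\<rparr>" using data_reply_honest by simp
    then have "R = R1(j \<mapsto> lists s j)" "inv op' = inv op" using data_reply_honest.prems by simp_all
    then show ?thesis using True data_reply_honest(1,2,3)
      by (intro disjI2 exI[of _ op] exI[of _ R1]) blast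
  qed (use data_reply_honest in simp)
next
  case (data_reply_byz s o' op R1 j L)
  show ?case
  proof (cases "i = o'")
    case True
    then have "op' = op\<lparr>phase := PGetData (R1(j \<mapsto> L))\<rparr>" using data_reply_byz by simp
    then have "R = R1(j \<mapsto> L)" "inv op' = inv op" using data_reply_byz.prems by simp_all
    then show ?thesis using True data_reply_byz(1,2,3,5)
      by (intro disjI2 exI[of _ op] exI[of _ R1]) blast
  qed (use data_reply_byz in simp)
next
  case (data_done s o' op R1 Q tt v)
  then show ?case by (cases "i = o'") auto
next
  case (put_deliver s o' op tt vv A j)
  then show ?case by (cases "i = o'") auto
next
  case (put_ack_byz s o' op tt vv A j)
  then show ?case by (cases "i = o'") auto
next
  case (byz_put j p s)
  then show ?case by auto
next
  case (put_done s o' op tt vv A)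
  then show ?case by (cases "i = o'") auto
qed












lemma P_read:
  assumes st: "step C B k \<delta> enc dec t0 v0 s s'" and I: "I_read C B k \<delta> t0 s" "I_lists s t0" "I_ops s"
    "I_done C B k \<delta> t0 s"
  shows "I_read C B k \<delta> t0 s'"
  unfolding I_read_def
proof (intro allI impI)
  fix i op' R assume o: "ops s' i = Some op'" and p: "phase op' = PGetData R"
  have TS: "TS s t0 \<subseteq> TS s' t0" using L_TS[OF st] .
  have cl: "clock s' = Suc (clock s)" using L_clock[OF st] .
  from L_read[OF st o p]
  show "(\<forall>j L. R j = Some L \<longrightarrow> fst ` L \<subseteq> TS s' t0) \<and>
        (\<forall>t\<in>insert t0 (Tb s' (inv op')). \<exists>G\<subseteq>C - B. qsize (card C) k \<le> card G + card B \<and>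
            (\<forall>j\<in>G. Good \<delta> (lists s' j) t \<and> (\<forall>L. R j = Some L \<longrightarrow> Good \<delta> L t)))"
  proof
    assume "ops s i = None \<and> inv op' = clock s \<and> R = (\<lambda>_. None)"
    then have a: "ops s i = None" "inv op' = clock s" "R = (\<lambda>_. None)" by auto
    have "\<exists>G\<subseteq>C - B. qsize (card C) k \<le> card G + card B \<and>
            (\<forall>j\<in>G. Good \<delta> (lists s' j) t \<and> (\<forall>L. R j = Some L \<longrightarrow> Good \<delta> L t))"
      if t: "t \<in> insert t0 (Tb s' (inv op'))" for t
    proof -
      have "t \<in> insert t0 (Tb s (clock s))" using t Tb_mono[OF st le_refl] unfolding a(2) by blast
      from bspec[OF I(4)[unfolded I_done_def] this]
      obtain G where G: "G \<subseteq> C - B" "qsize (card C) k \<le> card G + card B" "\<forall>j\<in>G. Good \<delta> (lists s j) t"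
        by blast
      have "\<forall>j\<in>G. Good \<delta> (lists s' j) t" using L_good[OF st I(2)] G(3) by blast
      then show ?thesis using G(1,2) a(3) by blast
    qed
    then show ?thesis using a(3) by simp
  next
    assume "\<exists>op R0. ops s i = Some op \<and> phase op = PGetData R0 \<and> inv op' = inv op \<and>
     (R = R0 \<or> (\<exists>j. j \<in> C - B \<and> R = R0(j := Some (lists s j))) \<or>
      (\<exists>j L. j \<in> B \<and> L \<subseteq> signed C enc t0 v0 s \<and> R = R0(j := Some L)))"
    then obtain op R0 where a: "ops s i = Some op" "phase op = PGetData R0" "inv op' = inv op"
      and R: "R = R0 \<or> (\<exists>j. j \<in> C - B \<and> R = R0(j := Some (lists s j))) \<or>
      (\<exists>j L. j \<in> B \<and> L \<subseteq> signed C enc t0 v0 s \<and> R = R0(j := Some L))" by blast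
    note rd = I(1)[unfolded I_read_def, rule_format, OF a(1,2)]
    have old1: "\<forall>j L. R0 j = Some L \<longrightarrow> fst ` L \<subseteq> TS s t0" using rd by (rule conjunct1)
    have old2: "\<forall>t\<in>insert t0 (Tb s (inv op)). \<exists>G\<subseteq>C - B. qsize (card C) k \<le> card G + card B \<and>
            (\<forall>j\<in>G. Good \<delta> (lists s j) t \<and> (\<forall>L. R0 j = Some L \<longrightarrow> Good \<delta> L t))"
      using rd by (rule conjunct2)
    have invlt: "inv op < clock s" using I(3)[unfolded I_ops_def, rule_format, OF a(1)] by (rule conjunct1)
    have part1: "\<forall>j L. R j = Some L \<longrightarrow> fst ` L \<subseteq> TS s' t0"
    proof (intro allI impI)
      fix j L assume "R j = Some L"
      then have "R0 j = Some L \<or> L = lists s j \<or> L \<subseteq> signed C enc t0 v0 s"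
        using R by (auto split: if_splits)
      moreover have "fst ` lists s j \<subseteq> TS s t0" using I(2) unfolding I_lists_def by blast
      ultimately have "fst ` L \<subseteq> TS s t0" using old1 signed_TS[of C enc t0 v0 s] by blast
      then show "fst ` L \<subseteq> TS s' t0" using TS by blast
    qed
    have "\<exists>G\<subseteq>C - B. qsize (card C) k \<le> card G + card B \<and>
            (\<forall>j\<in>G. Good \<delta> (lists s' j) t \<and> (\<forall>L. R j = Some L \<longrightarrow> Good \<delta> L t))"
      if t: "t \<in> insert t0 (Tb s' (inv op'))" for t
    proof -
      have "t \<in> insert t0 (Tb s (inv op))" using t a(3) Tb_mono[OF st, of "inv op"] invlt by auto
      from bspec[OF old2 this]
      obtain G where G: "G \<subseteq> C - B" "qsize (card C) k \<le> card G + card B"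
        "\<forall>j\<in>G. Good \<delta> (lists s j) t \<and> (\<forall>L. R0 j = Some L \<longrightarrow> Good \<delta> L t)"
        by blast
      have "\<forall>j\<in>G. Good \<delta> (lists s' j) t \<and> (\<forall>L. R j = Some L \<longrightarrow> Good \<delta> L t)"
      proof
        fix j assume j: "j \<in> G"
        have g1: "Good \<delta> (lists s' j) t" using L_good[OF st I(2)] G(3) j by blast
        have "R j = R0 j \<or> R j = Some (lists s j)" using R j G(1) by (auto split: if_splits)
        then have "\<forall>L. R j = Some L \<longrightarrow> Good \<delta> L t" using G(3) j by auto
        then show "Good \<delta> (lists s' j) t \<and> (\<forall>L. R j = Some L \<longrightarrow> Good \<delta> L t)" using g1 by blast
      qed
      then show ?thesis using G(1,2) by blast
    qed
    then show ?thesis using part1 by blast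
  qed
qed

lemma qsize_le: "k \<le> n \<Longrightarrow> qsize n k \<le> n"
proof -
  assume "k \<le> n"
  then have "(2 * real n + real k) / 3 \<le> real n" by simp
  then have "\<lceil>(2 * real n + real k) / 3\<rceil> \<le> int n" by (simp add: ceiling_le_iff)
  then show ?thesis unfolding qsize_def using \<open>k \<le> n\<close> by simp
qed

lemma Inv_init:
  assumes "finite C" "B \<subseteq> C" "k \<le> card C"
  shows "Inv C B k \<delta> t0 (init C enc t0 v0)"
proof -
  let ?s = "init C enc t0 v0"
  have tb: "Tb ?s I = {}" for I unfolding Tb_def init_def by simp
  have "I_fin ?s" unfolding I_fin_def init_def by simp
  moreover have "I_ops ?s" unfolding I_ops_def init_def by simp
  moreover have "I_lists ?s t0" unfolding I_lists_def TS_def init_def by simp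
  moreover have "I_wtag ?s t0" unfolding I_wtag_def init_def by simp
  moreover have "I_put C B \<delta> ?s" unfolding I_put_def init_def by simp
  moreover have "I_read C B k \<delta> t0 ?s" unfolding I_read_def init_def by simp
  moreover have "I_done C B k \<delta> t0 ?s"
  proof -
    have "card (C - B) + card B = card C" using assms(1,2) card_mono[OF assms(1,2)] by (simp add: card_Diff_subset finite_subset)
    moreover have "qsize (card C) k \<le> card C" using qsize_le assms(3) by blast
    moreover have "\<forall>j\<in>C - B. Good \<delta> (lists ?s j) t0" unfolding Good_def init_def by simp
    ultimately show ?thesis unfolding I_done_def tb by simp (metis order_refl)
  qed
  ultimately show ?thesis unfolding Inv_def by blast
qed

lemma Inv_step:
  assumes "step C B k \<delta> enc dec t0 v0 s s'" "Inv C B k \<delta> t0 s" "finite C" "B \<subseteq> C" "1 \<le> k"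
  shows "Inv C B k \<delta> t0 s'"
proof -
  have I: "I_fin s" "I_ops s" "I_lists s t0" "I_wtag s t0" "I_put C B \<delta> s" "I_done C B k \<delta> t0 s"
    "I_read C B k \<delta> t0 s" using assms(2) unfolding Inv_def by simp_all
  show ?thesis unfolding Inv_def
    using P_fin[OF assms(1) I(1)] P_ops[OF assms(1) I(2)] P_lists[OF assms(1) I(3)]
      P_wtag[OF assms(1) I(4) I(2) I(7) I(1) assms(5)]
      P_put[OF assms(1) I(5) I(3) assms(4)] P_done[OF assms(1) I(6) I(3) I(2) I(5) assms(3,4)]
      P_read[OF assms(1) I(7) I(3) I(2) I(6)] by simp
qed

lemma Inv_reach:
  assumes "reachable C B k \<delta> enc dec t0 v0 s" "finite C" "B \<subseteq> C" "1 \<le> k" "k \<le> card C"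
  shows "Inv C B k \<delta> t0 s"
  using assms(1) unfolding reachable_def
proof (induction rule: rtranclp_induct)
  case base
  show ?case by (rule Inv_init[OF assms(2,3,5)])
next
  case (step y z)
  show ?case by (rule Inv_step[OF step.hyps(2) step.IH assms(2-4)])
qed

lemma qsize_ge: "(2 * real n + real k) / 3 \<le> real (qsize n k)"
proof -
  have "0 \<le> (2 * real n + real k) / 3" by simp
  then have "0 \<le> \<lceil>(2 * real n + real k) / 3\<rceil>" by simp
  then have "real (qsize n k) = of_int \<lceil>(2 * real n + real k) / 3\<rceil>" unfolding qsize_def by simp
  then show ?thesis by linarith
qed

lemma gdr_some: "k \<le> card {j \<in> Q. \<exists>e. (t, e) \<in> the (R j)} \<Longrightarrow> \<exists>t v. get_data_result k dec Q R = Some (t, v)"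
proof -
  assume a: "k \<le> card {j \<in> Q. \<exists>e. (t, e) \<in> the (R j)}"
  define T where "T = {t. k \<le> card {j \<in> Q. \<exists>e. (t, e) \<in> the (R j)}}"
  have eq: "get_data_result k dec Q R = (if T = {} then None
      else Some (Max T, dec {(j, e). j \<in> Q \<and> (Max T, e) \<in> the (R j)}))"
    unfolding get_data_result_def T_def Let_def by (rule refl)
  have "t \<in> T" using a unfolding T_def by simp
  then have "T \<noteq> {}" by blast
  then show ?thesis unfolding eq by simp
qed

theorem mainTheorem2:
  fixes C B :: "'n set" and k b \<delta> :: nat
    and enc :: "'v \<Rightarrow> 'n \<Rightarrow> 'e" and dec :: "('n \<times> 'e) set \<Rightarrow> 'v"
    and t0 :: "'w::linorder tag" and v0 :: 'v
    and s :: "('n, 'w, 'v, 'e) state" and \<rho> :: nat and op :: "('n, 'w, 'v, 'e) opst"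
    and R :: "'n \<Rightarrow> ('w tag \<times> 'e) set option" and Q :: "'n set"
  assumes "finite C" and "1 \<le> k" and "k \<le> card C"
    and "B \<subseteq> C" and "card B \<le> b" and "real b < (real (card C) - real k) / 3"
    and "1 \<le> \<delta>"
    and "reachable C B k \<delta> enc dec t0 v0 s"
    and "ops s \<rho> = Some op" and "kind op = Rd" and "phase op = PGetData R"
    and "Q \<subseteq> C" and "card Q = qsize (card C) k" and "\<forall>j\<in>Q. R j \<noteq> None"
    and "card {w. \<exists>opw. ops s w = Some opw \<and> kind opw = Wr \<and> concurrent opw op} \<le> \<delta>"
  shows "\<exists>t v. get_data_result k dec Q R = Some (t, v)"
proof -
  note fC = assms(1) and BC = assms(4) and o = assms(9) and ph = assms(11) and QC = assms(12)
  have Inv: "Inv C B k \<delta> t0 s" using Inv_reach[OF assms(8) assms(1) assms(4) assms(2) assms(3)] .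
  have I: "I_fin s" "I_ops s" "I_lists s t0" "I_wtag s t0" "I_read C B k \<delta> t0 s"
    using Inv unfolding Inv_def by simp_all
  note rd = I(5)[unfolded I_read_def, rule_format, OF o ph]
  have part1: "\<forall>j L. R j = Some L \<longrightarrow> fst ` L \<subseteq> TS s t0" using rd by (rule conjunct1)
  have part2: "\<forall>t\<in>insert t0 (Tb s (inv op)). \<exists>G\<subseteq>C - B. qsize (card C) k \<le> card G + card B \<and>
        (\<forall>j\<in>G. Good \<delta> (lists s j) t \<and> (\<forall>L. R j = Some L \<longrightarrow> Good \<delta> L t))" using rd by (rule conjunct2)
  have opi: "inv op < clock s \<and> (\<forall>r. resp op = Some r \<longrightarrow> r < clock s) \<and>
     (resp op = None \<longleftrightarrow> (\<forall>t v. phase op \<noteq> PDone t v)) \<and> (\<forall>v R. phase op = PGetTag v R \<longrightarrow> kind op = Wr)"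
    using I(2)[unfolded I_ops_def, rule_format, OF o] .
  have respN: "resp op = None" using opi ph by simp
  have finTS: "finite (TS s t0)" using TS_fin[OF I(1)] .
  define Tm where "Tm = insert t0 (Tb s (inv op))"
  have finTm: "finite Tm" unfolding Tm_def using finite_subset[OF Tb_TS finTS] by simp
  define ts where "ts = Max Tm"
  have tsin: "ts \<in> Tm" unfolding ts_def by (rule Max_in[OF finTm]) (simp add: Tm_def)
  have tsge: "\<And>t. t \<in> Tm \<Longrightarrow> t \<le> ts" unfolding ts_def by (rule Max_ge[OF finTm])
  obtain G where G: "G \<subseteq> C - B" "qsize (card C) k \<le> card G + card B"
      "\<forall>j\<in>G. Good \<delta> (lists s j) ts \<and> (\<forall>L. R j = Some L \<longrightarrow> Good \<delta> L ts)"
    using bspec[OF part2 tsin[unfolded Tm_def]] by blast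
  define CW where "CW = {w. \<exists>opw. ops s w = Some opw \<and> kind opw = Wr \<and> concurrent opw op}"
  define f where "f = (\<lambda>w. the (ptag (phase (the (ops s w)))))"
  have finCW: "finite CW"
  proof -
    have "CW \<subseteq> dom (ops s)" unfolding CW_def by blast
    then show ?thesis using I(1) unfolding I_fin_def using finite_subset by blast
  qed
  have hi: "{t'\<in>TS s t0. ts < t'} \<subseteq> f ` CW"
  proof
    fix t' assume "t' \<in> {t'\<in>TS s t0. ts < t'}"
    then have t': "t' \<in> TS s t0" "ts < t'" by auto
    have "t0 \<le> ts" using tsge Tm_def by simp
    then have "t' \<noteq> t0" using t'(2) by auto
    then obtain i op1 where "ops s i = Some op1" "ptag (phase op1) = Some t'" using t'(1) unfolding TS_def by auto
    then obtain w opw where w: "ops s w = Some opw" "kind opw = Wr" "ptag (phase opw) = Some t'"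
      using I(4)[unfolded I_wtag_def, rule_format] \<open>t' \<noteq> t0\<close> by blast
    have wi: "(resp opw = None \<longleftrightarrow> (\<forall>t v. phase opw \<noteq> PDone t v))"
      using I(2)[unfolded I_ops_def, rule_format, OF w(1)] by blast
    have np: "\<not> precedes opw op"
    proof
      assume "precedes opw op"
      then obtain r where r: "resp opw = Some r" "r < inv op" unfolding precedes_def by blast
      then obtain tt v where "phase opw = PDone tt v" using wi by auto
      then have "tt = t'" "phase opw = PDone t' v" using w(3) by simp_all
      then have "t' \<in> Tb s (inv op)" unfolding Tb_def using w(1) r by blast
      then have "t' \<le> ts" using tsge Tm_def by simp
      then show False using t'(2) by simp
    qed
    have "\<not> precedes op opw" using respN unfolding precedes_def by simp
    then have "concurrent opw op" using np unfolding concurrent_def by simp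
    then have "w \<in> CW" unfolding CW_def using w by blast
    moreover have "f w = t'" unfolding f_def using w by simp
    ultimately show "t' \<in> f ` CW" by blast
  qed
  have cnt: "card {t'\<in>TS s t0. ts < t'} \<le> \<delta>"
  proof -
    have "card {t'\<in>TS s t0. ts < t'} \<le> card (f ` CW)" using hi finCW by (simp add: card_mono)
    also have "\<dots> \<le> card CW" using finCW by (rule card_image_le)
    also have "\<dots> \<le> \<delta>" using assms(15) unfolding CW_def .
    finally show ?thesis .
  qed
  have GQ: "G \<inter> Q \<subseteq> {j \<in> Q. \<exists>e. (ts, e) \<in> the (R j)}"
  proof
    fix j assume j: "j \<in> G \<inter> Q"
    then obtain L where L: "R j = Some L" using assms(14) by blast
    have gd: "Good \<delta> L ts" using G(3) j L by blast
    have sub: "fst ` L \<subseteq> TS s t0" using part1 L by blast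
    have "\<exists>e. (ts, e) \<in> L"
    proof (rule ccontr)
      assume "\<not> (\<exists>e. (ts, e) \<in> L)"
      then have "\<delta> + 1 \<le> card {t'\<in>fst ` L. ts < t'}" using gd unfolding Good_def by blast
      also have "\<dots> \<le> card {t'\<in>TS s t0. ts < t'}" using sub finTS by (intro card_mono) auto
      finally show False using cnt by simp
    qed
    then show "j \<in> {j \<in> Q. \<exists>e. (ts, e) \<in> the (R j)}" using j L by simp
  qed
  have fG: "finite G" using G(1) fC finite_subset by blast
  have fQ: "finite Q" using QC fC finite_subset by blast
  have un: "card (G \<union> Q) \<le> card C" using G(1) QC fC by (intro card_mono) auto
  have ui: "card G + card Q = card (G \<union> Q) + card (G \<inter> Q)" using card_Un_Int[OF fG fQ] .
  have qge: "(2 * real (card C) + real k) / 3 \<le> real (qsize (card C) k)" by (rule qsize_ge)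
  have r1: "real (card G) + real (card Q) = real (card (G \<union> Q)) + real (card (G \<inter> Q))"
    using ui by (metis of_nat_add)
  have r2: "real (qsize (card C) k) \<le> real (card G) + real (card B)" using G(2) by (metis of_nat_add of_nat_le_iff)
  have r3: "real (card (G \<union> Q)) \<le> real (card C)" using un by simp
  have r4: "real (card B) \<le> real b" using assms(5) by simp
  have r5: "real (card Q) = real (qsize (card C) k)" using assms(13) by simp
  have q3: "2 * real (card C) + real k \<le> 3 * real (qsize (card C) k)" using qge by simp
  have b3: "3 * real b < real (card C) - real k" using assms(6) by simp
  have "real k \<le> real (card (G \<inter> Q))" using r1 r2 r3 r4 r5 q3 b3 by linarith
  then have "k \<le> card (G \<inter> Q)" by simp
  also have "\<dots> \<le> card {j \<in> Q. \<exists>e. (ts, e) \<in> the (R j)}" using GQ fQ by (intro card_mono) auto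
  finally show ?thesis by (rule gdr_some)
qed


end
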